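(* Let $q\ge4$ be even, let $\alpha,\beta\in\mathbb{F}_{q^2}$ with $\alpha\neq0$, $\beta\notin\mathbb{F}_q$ and $\alpha^{q+1}/(\beta^q+\beta)^2$ of absolute trace $0$, let $R=(0,\delta,1)$ and $U_\infty=(1,0,0)$. If $\ell$ is a line of $\mathrm{PG}(2,q^2)$ not through $U_\infty$, then $\ell$ meets $\mathrm{pedal}(R)$ in at most two points.
   Context: Points of $\mathrm{PG}(2,q^2)$ have homogeneous coordinates $(x,y,z)$. $\delta\in\mathbb{F}_{q^2}\setminus\mathbb{F}_q$ satisfies $\delta^q=1+\delta$ and $\delta^2=v+\delta$ with $v\in\mathbb{F}_q$, $v\ne1$, of absolute trace $1$. $\mathcal U_{\alpha\beta}=\{(x,\alpha x^2+\beta x^{q+1}+r,1): x\in\mathbb{F}_{q^2}, r\in\mathbb{F}_q\}\cup\{(0,1,0)\}$, which under the hypotheses is a unital (a set of $q^3+1$ points meeting every line in $1$ or $q+1$ points), and $R\notin\mathcal U_{\alpha\beta}$. For a point $P$ not on the unital, $\mathrm{pedal}(P)$ is the set of points of contact of the $q+1$ tangent lines (lines meeting the unital in exactly one point) through $P$. *)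

theory Defs
  imports Main
begin

type_synonym 'a vec3 = "'a \<times> 'a \<times> 'a"

definition smult3 :: "'a::field \<Rightarrow> 'a vec3 \<Rightarrow> 'a vec3" where
  "smult3 c v = (case v of (x, y, z) \<Rightarrow> (c * x, c * y, c * z))"

definition ppt :: "'a::field vec3 \<Rightarrow> 'a vec3 set" where
  "ppt v = {smult3 c v | c. c \<noteq> 0}"

definition PG2 :: "'a::field vec3 set set" where
  "PG2 = {ppt v | v. v \<noteq> (0, 0, 0)}"

definition dot3 :: "'a::field vec3 \<Rightarrow> 'a vec3 \<Rightarrow> 'a" where
  "dot3 u v = (case u of (a, b, c) \<Rightarrow> case v of (x, y, z) \<Rightarrow> a * x + b * y + c * z)"

definition pline :: "'a::field vec3 \<Rightarrow> 'a vec3 set set" where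
  "pline L = {P \<in> PG2. \<exists>v \<in> P. dot3 L v = 0}"

definition PG2_lines :: "'a::field vec3 set set set" where
  "PG2_lines = {pline L | L. L \<noteq> (0, 0, 0)}"

definition subF :: "nat \<Rightarrow> 'a::field set" where
  "subF q = {x. x ^ q = x}"

definition abs_trace :: "nat \<Rightarrow> 'a::field \<Rightarrow> 'a" where
  "abs_trace h x = (\<Sum>i<h. x ^ (2 ^ i))"

definition U_ab :: "nat \<Rightarrow> 'a::field \<Rightarrow> 'a \<Rightarrow> 'a vec3 set set" where
  "U_ab q \<alpha> \<beta> = {ppt (x, \<alpha> * x ^ 2 + \<beta> * x ^ (q + 1) + r, 1) | x r. r \<in> subF q}
                  \<union> {ppt (0, 1, 0)}"

definition tangent_line :: "'a::field vec3 set set \<Rightarrow> 'a vec3 set set \<Rightarrow> bool" where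
  "tangent_line U l \<longleftrightarrow> l \<in> PG2_lines \<and> card (l \<inter> U) = 1"

definition pedal :: "'a::field vec3 set set \<Rightarrow> 'a vec3 set \<Rightarrow> 'a vec3 set set" where
  "pedal U P = {X. \<exists>l. tangent_line U l \<and> P \<in> l \<and> l \<inter> U = {X}}"

end

theory Submission
  imports Defs
begin


lemma fermat_fin:
  fixes x :: "'a::{field,finite}"
  shows "x ^ card (UNIV :: 'a set) = x"
proof (cases "x = 0")
  case True
  have "card (UNIV :: 'a set) > 0" by (simp add: finite_UNIV_card_ge_0)
  then show ?thesis using True by (simp add: power_0_left)
next
  case False
  let ?S = "UNIV - {0::'a}"
  have bij: "bij_betw (\<lambda>y. x * y) ?S ?S"
    unfolding bij_betw_def inj_on_def
  proof (intro conjI ballI impI)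
    show "(*) x ` ?S = ?S"
    proof
      show "(*) x ` ?S \<subseteq> ?S" using False by auto
      show "?S \<subseteq> (*) x ` ?S"
      proof
        fix y assume "y \<in> ?S"
        then have "y = x * (y / x)" "y / x \<in> ?S" using False by auto
        then show "y \<in> (*) x ` ?S" by blast
      qed
    qed
  qed (use False in auto)
  have "prod (\<lambda>y. x * y) ?S = prod (\<lambda>y. y) ?S"
    using prod.reindex_bij_betw[OF bij, of "\<lambda>y. y"] by simp
  moreover have "prod (\<lambda>y. x * y) ?S = x ^ card ?S * prod (\<lambda>y. y) ?S"
    by (simp add: prod.distrib)
  moreover have "prod (\<lambda>y. y) ?S \<noteq> 0" by simp
  ultimately have "x ^ card ?S = 1" by simp
  moreover have "card (UNIV :: 'a set) = Suc (card ?S)"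
  proof -
    have "card ?S = card (UNIV :: 'a set) - 1" by (rule card_Diff_singleton) simp
    moreover have "card (UNIV :: 'a set) > 0" by (rule finite_UNIV_card_ge_0) simp
    ultimately show ?thesis by linarith
  qed
  ultimately show ?thesis by (simp only: power_Suc mult_1_right)
qed



lemma frob2:
  fixes x y :: "'a::field"
  assumes two: "(2::'a) = 0"
  shows "(x + y) ^ (2 ^ i) = x ^ (2 ^ i) + y ^ (2 ^ i)"
proof (induction i)
  case 0 then show ?case by simp
next
  case (Suc i)
  have sq: "(a + b)^2 = a^2 + b^2" for a b :: 'a
  proof -
    have "(a + b)^2 = a^2 + b^2 + 2 * a * b" by (simp add: power2_eq_square algebra_simps)
    then show ?thesis using two by simp
  qed
  have "(x + y) ^ (2 ^ Suc i) = ((x + y) ^ (2 ^ i))^2" by (simp add: power_mult[symmetric] mult.commute)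
  also have "\<dots> = (x ^ (2 ^ i))^2 + (y ^ (2 ^ i))^2" using Suc sq by simp
  also have "\<dots> = x ^ (2 ^ Suc i) + y ^ (2 ^ Suc i)" by (simp add: power_mult[symmetric] mult.commute)
  finally show ?case .
qed

lemma trace_artin:
  fixes u :: "'a::field"
  assumes two: "(2::'a) = 0"
  shows "abs_trace h (u^2 + u) = u ^ (2 ^ h) - u"
proof -
  have "abs_trace h (u^2 + u) = (\<Sum>i<h. u ^ (2 ^ Suc i) - u ^ (2 ^ i))"
    unfolding abs_trace_def
  proof (rule sum.cong)
    fix i assume "i \<in> {..<h}"
    have "(u^2 + u) ^ (2 ^ i) = (u^2)^(2^i) + u^(2^i)" by (rule frob2[OF two])
    also have "(u^2)^(2^i) = u ^ (2 ^ Suc i)" by (simp add: power_mult[symmetric])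
    also have "u ^ (2 ^ Suc i) + u ^ (2 ^ i) = u ^ (2 ^ Suc i) - u ^ (2 ^ i)"
    proof -
      have "u ^ (2 ^ i) + u ^ (2 ^ i) = 2 * u ^ (2 ^ i)" by simp
      then have "u ^ (2 ^ i) + u ^ (2 ^ i) = 0" using two by simp
      then show ?thesis by (simp add: eq_neg_iff_add_eq_0 add_eq_0_iff2)
    qed
    finally show "(u^2 + u) ^ (2 ^ i) = u ^ (2 ^ Suc i) - u ^ (2 ^ i)" .
  qed simp
  also have "\<dots> = u ^ (2 ^ h) - u" by (subst sum_lessThan_telescope) simp
  finally show ?thesis .
qed

locale F2 =
  fixes q :: nat and cj :: "'a::field \<Rightarrow> 'a"
  assumes cj_def: "cj x = x ^ q"
    and two: "(2::'a) = 0"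
    and cj_add: "cj (x + y) = cj x + cj y"
    and cj_cj: "cj (cj x) = x"
    and q_pos: "q > 0"
begin

lemma neg [simp]: "- x = (x::'a)"
proof -
  have "x + x = 2 * x" by simp
  then have "x + x = 0" using two by simp
  then show ?thesis by (simp add: add_eq_0_iff2 eq_neg_iff_add_eq_0)
qed

lemma minus_is_plus [simp]: "x - y = x + (y::'a)"
  by (metis diff_conv_add_uminus neg)

lemma add_self [simp]: "x + x = (0::'a)"
  by (metis add.right_inverse neg)

lemma cj_mult [simp]: "cj (x * y) = cj x * cj y"
  by (simp add: cj_def power_mult_distrib)
lemma cj_0 [simp]: "cj 0 = 0" using q_pos by (simp add: cj_def)
lemma cj_1 [simp]: "cj 1 = 1" by (simp add: cj_def)
lemma cj_power [simp]: "cj (x ^ n) = cj x ^ n"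
  by (simp add: cj_def power_mult[symmetric] mult.commute)
lemma cj_inverse [simp]: "cj (inverse x) = inverse (cj x)"
  by (simp add: cj_def power_inverse)
lemma cj_div [simp]: "cj (x / y) = cj x / cj y"
  by (simp add: divide_inverse)
lemma cj_eq0 [simp]: "cj x = 0 \<longleftrightarrow> x = 0"
  by (metis cj_0 cj_cj)
declare cj_add [simp] cj_cj [simp]

definition Qf :: "'a \<Rightarrow> 'a \<Rightarrow> 'a \<Rightarrow> 'a" where
  "Qf a b w = cj a * (cj w)^2 + a * w^2 + b * cj w * w"

lemma Qf_cj: "cj b = b \<Longrightarrow> cj (Qf a b w) = Qf a b w"
  by (simp add: Qf_def algebra_simps)

lemma Qf_scale: "cj m = m \<Longrightarrow> Qf a b (m * w) = m^2 * Qf a b w"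
  by (simp add: Qf_def algebra_simps power2_eq_square)

lemma Qf_add: "Qf a b (x + z) = Qf a b x + Qf a b z + b * (cj x * z + x * cj z)"
proof -
  have "Qf a b (x + z) = Qf a b x + Qf a b z + b * (cj x * z + x * cj z) + 2 * (cj a * cj x * cj z + a * x * z)"
    by (simp add: Qf_def algebra_simps power2_eq_square)
  then show ?thesis using two by simp
qed

lemma key_shift:
  assumes bcj: "cj b = b" and bnz: "b \<noteq> 0" and dl: "cj d + d = 1"
    and Mdef: "M = b * cj c" and ydef: "y = x + c"
    and Qd: "Qf a b (d * y) \<noteq> 0"
    and mudef: "mu = b * cj y * y / Qf a b (d * y)"
    and zdef: "z = mu * (d * y)"
  shows "Qf a b (x + z) + cj M * cj (x + z) + M * (x + z) = Qf a b x + cj M * cj x + M * x"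
proof -
  have cjmu: "cj mu = mu" using bcj Qf_cj[OF bcj] by (simp add: mudef mult.commute)
  have Qz: "Qf a b z = mu^2 * Qf a b (d * y)" using Qf_scale[OF cjmu] zdef by simp
  have cjM: "cj M = b * c" using Mdef bcj by simp
  have "Qf a b (x + z) + cj M * cj (x + z) + M * (x + z)
      = (Qf a b x + cj M * cj x + M * x) + (Qf a b z + b * (cj y * z + y * cj z))"
    unfolding Qf_add cjM Mdef ydef using bcj by (simp add: algebra_simps)
  also have "cj y * z + y * cj z = mu * cj y * y * (cj d + d)"
    using cjmu by (simp add: zdef algebra_simps)
  also have "\<dots> = mu * cj y * y" using dl by simp
  also have "Qf a b z + b * (mu * cj y * y) = mu * (mu * Qf a b (d * y) + b * cj y * y)"
    using Qz by (simp add: algebra_simps power2_eq_square)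
  also have "mu * Qf a b (d * y) = b * cj y * y" using Qd by (simp add: mudef)
  finally show ?thesis by simp
qed

lemma aniso:
  assumes qh: "q = 2 ^ h" and bcj: "cj b = b" and bnz: "b \<noteq> 0"
    and tr: "abs_trace h (a ^ (q + 1) / b ^ 2) = 0" and wnz: "w \<noteq> 0"
  shows "Qf a b w \<noteq> 0"
proof
  assume Q0: "Qf a b w = 0"
  define n where "n = cj w * w"
  have nnz: "n \<noteq> 0" using wnz by (simp add: n_def)
  have cjn: "cj n = n" by (simp add: n_def mult.commute)
  define u where "u = a * w^2 / (b * n)"
  have cju: "cj u = cj a * (cj w)^2 / (b * n)" using bcj cjn by (simp add: u_def)
  have "u + cj u = (a * w^2 + cj a * (cj w)^2) / (b * n)"
    using bcj cjn by (simp add: u_def cju add_divide_distrib)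
  also have "a * w^2 + cj a * (cj w)^2 = b * n"
  proof -
    have "(a * w^2 + cj a * (cj w)^2) + b * n = 0" using Q0 by (simp add: Qf_def n_def algebra_simps)
    then show ?thesis by (metis eq_neg_iff_add_eq_0 neg)
  qed
  also have "b * n / (b * n) = 1" using bnz nnz by simp
  finally have s1: "u + cj u = 1" .
  have "cj u * u = cj a * a * ((cj w)^2 * w^2) / (b^2 * n^2)"
    using bcj cjn by (simp add: u_def power2_eq_square mult_ac)
  also have "(cj w)^2 * w^2 = n^2" by (simp add: n_def power2_eq_square algebra_simps)
  finally have s2: "cj u * u = cj a * a / b^2" using nnz by simp
  have "u^2 + u = u^2 + u * (u + cj u)" using s1 by simp
  also have "\<dots> = cj u * u" using two by (simp add: power2_eq_square algebra_simps)
  finally have s3: "u^2 + u = a ^ (q + 1) / b^2" using s2 by (simp add: cj_def mult.commute)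
  have "abs_trace h (u^2 + u) = u ^ (2 ^ h) - u" by (rule trace_artin[OF two])
  also have "\<dots> = 1" using s1 qh by (simp add: cj_def add.commute)
  finally show False using tr s3 by simp
qed

end


lemma smult3_1 [simp]: "smult3 1 v = v"
  by (cases v) (simp add: smult3_def)

lemma in_ppt: "v \<in> ppt v"
  unfolding ppt_def by (rule CollectI, rule exI[of _ 1]) simp

lemma ppt_in_PG2: "v \<noteq> (0,0,0) \<Longrightarrow> ppt v \<in> PG2"
  unfolding PG2_def by blast

lemma mem_ppt_z1: "((x::'a::field), y, 1) \<in> ppt (x', y', 1) \<longleftrightarrow> x = x' \<and> y = y'"
  unfolding ppt_def smult3_def by auto

lemma ppt_z1_eq: "ppt ((x::'a::field), y, 1) = ppt (x', y', 1) \<Longrightarrow> x = x' \<and> y = y'"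
  using in_ppt[of "(x,y,1)"] mem_ppt_z1 by blast

lemma ppt_010_ne: "ppt ((0::'a::field), 1, 0) \<noteq> ppt (x, y, 1)"
proof
  assume "ppt ((0::'a), 1, 0) = ppt (x, y, 1)"
  then have "(x, y, 1) \<in> ppt ((0::'a), 1, 0)" using in_ppt by metis
  then show False unfolding ppt_def smult3_def by auto
qed

lemma dot3_smult: "dot3 L (smult3 c v) = c * dot3 L v"
  by (cases L, cases v) (simp add: dot3_def smult3_def algebra_simps)

lemma ppt_in_pline: "v \<noteq> (0,0,0) \<Longrightarrow> ppt v \<in> pline L \<longleftrightarrow> dot3 L v = 0"
proof
  assume v: "v \<noteq> (0,0,0)" and "ppt v \<in> pline L"
  then obtain w where "w \<in> ppt v" "dot3 L w = 0" unfolding pline_def by blast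
  then obtain c where "c \<noteq> 0" "w = smult3 c v" "dot3 L w = 0" unfolding ppt_def by blast
  then show "dot3 L v = 0" by (simp add: dot3_smult)
next
  assume "v \<noteq> (0,0,0)" "dot3 L v = 0"
  then show "ppt v \<in> pline L" unfolding pline_def using ppt_in_PG2 in_ppt by blast
qed

lemma PG2_lines_E:
  assumes "l \<in> PG2_lines"
  obtains a b c where "(a, b, c) \<noteq> (0,0,0)" "l = pline (a, b, c)"
  using assms unfolding PG2_lines_def by auto

lemma mem_U_z1:
  "ppt (x, y, 1) \<in> U_ab q \<alpha> \<beta> \<longleftrightarrow> (y - \<alpha> * x^2 - \<beta> * x^(q+1)) \<in> subF q"
proof
  assume "ppt (x, y, 1) \<in> U_ab q \<alpha> \<beta>"
  then obtain x' r where "ppt (x, y, 1) = ppt (x', \<alpha> * x'^2 + \<beta> * x'^(q+1) + r, 1)" "r \<in> subF q"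
    unfolding U_ab_def using ppt_010_ne by fastforce
  moreover from this(1) have "x = x'" "y = \<alpha> * x'^2 + \<beta> * x'^(q+1) + r" using ppt_z1_eq by blast+
  ultimately show "(y - \<alpha> * x^2 - \<beta> * x^(q+1)) \<in> subF q" by simp
next
  assume "(y - \<alpha> * x^2 - \<beta> * x^(q+1)) \<in> subF q"
  moreover have "ppt (x, y, 1) = ppt (x, \<alpha> * x^2 + \<beta> * x^(q+1) + (y - \<alpha> * x^2 - \<beta> * x^(q+1)), 1)"
    by simp
  ultimately show "ppt (x, y, 1) \<in> U_ab q \<alpha> \<beta>" unfolding U_ab_def by blast
qed

lemma U_010: "ppt (0, 1, 0) \<in> U_ab q \<alpha> \<beta>"
  unfolding U_ab_def by blast

context F2
begin

lemma sum0: "x + y = 0 \<longleftrightarrow> x = (y::'a)"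
  by (metis eq_neg_iff_add_eq_0 neg)

lemma subF_cj: "X \<in> subF q \<longleftrightarrow> cj X = X"
  by (simp add: subF_def cj_def)

lemma pow_q1: "x ^ (q + 1) = cj x * x"
  by (simp add: cj_def)

lemma pedal_form:
  assumes qh: "q = 2 ^ h" and bnz: "cj \<beta> + \<beta> \<noteq> 0"
    and tr: "abs_trace h (\<alpha> ^ (q + 1) / (cj \<beta> + \<beta>) ^ 2) = 0" and dl: "cj \<delta> + \<delta> = 1"
    and P: "P \<in> pedal (U_ab q \<alpha> \<beta>) (ppt (0, \<delta>, 1))"
  shows "\<exists>x. P = ppt (x, (cj \<beta> + \<beta>) * cj x * x + \<delta>, 1)"
proof -
  define b where "b = cj \<beta> + \<beta>"
  have bcj: "cj b = b" by (simp add: b_def add.commute)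
  have bnz': "b \<noteq> 0" using bnz b_def by simp
  define U where "U = U_ab q \<alpha> \<beta>"
  from P obtain l' where tl: "tangent_line U l'" and Rl: "ppt (0, \<delta>, 1) \<in> l'" and lU: "l' \<inter> U = {P}"
    unfolding pedal_def U_def by blast
  from tl have "l' \<in> PG2_lines" by (simp add: tangent_line_def)
  then obtain a b1 c where L0: "(a, b1, c) \<noteq> (0,0,0)" and ll: "l' = pline (a, b1, c)"
    by (rule PG2_lines_E)
  have "b1 * \<delta> + c = 0" using Rl ll ppt_in_pline[of "(0,\<delta>,1)" "(a,b1,c)"] by (simp add: dot3_def)
  then have c: "c = b1 * \<delta>" using sum0[of "b1 * \<delta>" c] by simp
  show ?thesis
  proof (cases "b1 = 0")
    case True
    then have c0: "c = 0" using c by simp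
    have "ppt (0, 1, 0) \<in> l'" using ll True ppt_in_pline[of "(0,1,0)" "(a,b1,c)"]
      by (simp add: dot3_def)
    then have "ppt (0, 1, 0) \<in> l' \<inter> U" using U_010 by (simp add: U_def)
    then have e1: "ppt (0, 1, 0) = P" using lU by simp
    have "ppt (0, 0, 1) \<in> l' \<inter> U"
    proof
      show "ppt (0, 0, 1) \<in> l'" using ll c0 ppt_in_pline[of "(0,0,1)" "(a,b1,c)"] by (simp add: dot3_def)
      show "ppt (0, 0, 1) \<in> U" unfolding U_def mem_U_z1 subF_cj by simp
    qed
    then have e2: "ppt (0, 0, 1) = P" using lU by simp
    have "ppt (0::'a, 1, 0) = ppt (0, 0, 1)" unfolding e1 e2 by (rule refl)
    with ppt_010_ne show ?thesis by blast
  next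
    case False
    define M where "M = a / b1"
    define e where "e x = \<delta> + M * x + \<alpha> * x^2 + \<beta> * cj x * x" for x
    have onl: "ppt (x, M * x + \<delta>, 1) \<in> l' \<inter> U" if ex: "cj (e x) = e x" for x
    proof
      have "dot3 (a, b1, c) (x, M * x + \<delta>, 1) = 0"
        using False by (simp add: dot3_def M_def c algebra_simps)
      then show "ppt (x, M * x + \<delta>, 1) \<in> l'" using ll ppt_in_pline[of "(x, M * x + \<delta>, 1)" "(a,b1,c)"] by simp
      have "M * x + \<delta> - \<alpha> * x^2 - \<beta> * x^(q+1) = e x" by (simp add: e_def cj_def algebra_simps)
      then show "ppt (x, M * x + \<delta>, 1) \<in> U" unfolding U_def mem_U_z1 subF_cj using ex by simp
    qed
    have Pin: "P \<in> l' \<inter> U" using lU by blast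
    have "ppt (0, 1, 0) \<notin> l'" using ll False ppt_in_pline[of "(0,1,0)" "(a,b1,c)"] by (simp add: dot3_def)
    then have "P \<noteq> ppt (0, 1, 0)" using Pin by blast
    then obtain x1 r1 where P1: "P = ppt (x1, \<alpha> * x1^2 + \<beta> * x1^(q+1) + r1, 1)" and r1: "r1 \<in> subF q"
      using Pin unfolding U_def U_ab_def by blast
    define y1 where "y1 = \<alpha> * x1^2 + \<beta> * x1^(q+1) + r1"
    have "dot3 (a, b1, c) (x1, y1, 1) = 0" using Pin P1 ll ppt_in_pline[of "(x1, y1, 1)" "(a,b1,c)"] y1_def by simp
    then have "b1 * y1 + (a * x1 + b1 * \<delta>) = 0" by (simp add: dot3_def c add_ac)
    then have "b1 * y1 = a * x1 + b1 * \<delta>" using sum0 by simp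
    then have y1: "y1 = M * x1 + \<delta>" using False by (simp add: M_def field_simps)
    have "e x1 = y1 + (\<alpha> * x1^2 + \<beta> * cj x1 * x1)" using y1 by (simp add: e_def algebra_simps)
    also have "\<dots> = r1 + ((\<alpha> * x1^2 + \<beta> * cj x1 * x1) + (\<alpha> * x1^2 + \<beta> * cj x1 * x1))"
      unfolding y1_def pow_q1 by (simp only: mult.assoc add_ac)
    also have "\<dots> = r1" by (simp only: add_self add_0_right)
    finally have "e x1 = r1" .
    then have e1: "cj (e x1) = e x1" using r1 subF_cj by simp
    have Ee: "cj (e x) + e x = 1 + cj M * cj x + M * x + Qf \<alpha> b x" for x
    proof -
      have "cj (e x) + e x = (cj \<delta> + \<delta>) + cj M * cj x + M * x + Qf \<alpha> b x"
        by (simp add: e_def Qf_def b_def algebra_simps power2_eq_square)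
      then show ?thesis using dl by simp
    qed
    define c0 where "c0 = cj (M / b)"
    have Mc: "M = b * cj c0" using bnz' by (simp add: c0_def)
    show ?thesis
    proof (cases "x1 + c0 = 0")
      case True
      then have "c0 = x1" using sum0 by metis
      then have "y1 = b * cj x1 * x1 + \<delta>" using y1 Mc by simp
      then show ?thesis using P1 y1_def b_def by metis
    next
      case yne: False
      define y where "y = x1 + c0"
      have dnz: "\<delta> \<noteq> 0" using dl by auto
      have Qd: "Qf \<alpha> b (\<delta> * y) \<noteq> 0"
        using aniso[OF qh bcj bnz'] tr dnz yne by (simp add: b_def y_def)
      define mu where "mu = b * cj y * y / Qf \<alpha> b (\<delta> * y)"
      define z where "z = mu * (\<delta> * y)"
      have ynz: "y \<noteq> 0" using yne y_def by simp
      have cjy: "cj y \<noteq> 0" using ynz by simp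
      have znz: "z \<noteq> 0" using bnz' ynz cjy Qd dnz by (simp add: z_def mu_def)
      have ks: "Qf \<alpha> b (x1 + z) + cj M * cj (x1 + z) + M * (x1 + z) = Qf \<alpha> b x1 + cj M * cj x1 + M * x1"
        by (rule key_shift[OF bcj bnz' dl Mc y_def Qd mu_def z_def])
      have "cj (e (x1 + z)) + e (x1 + z) = cj (e x1) + e x1"
        unfolding Ee using ks by (simp add: add_ac)
      also have "\<dots> = 0" using e1 by simp
      finally have "cj (e (x1 + z)) = e (x1 + z)" using sum0 by metis
      from onl[OF this] have "ppt (x1 + z, M * (x1 + z) + \<delta>, 1) = P" using lU by blast
      then have "x1 + z = x1" using P1 ppt_z1_eq by metis
      then show ?thesis using znz by simp
    qed
  qed
qed

end



lemma quad3:
  fixes A B C n1 n2 n3 :: "'a::field"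
  assumes A: "A \<noteq> 0" and r1: "A * n1^2 + B * n1 + C = 0" and r2: "A * n2^2 + B * n2 + C = 0"
    and r3: "A * n3^2 + B * n3 + C = 0" and d12: "n1 \<noteq> n2" and d13: "n1 \<noteq> n3"
  shows "n2 = n3"
proof -
  have "(n1 - n2) * (A * (n1 + n2) + B) = (A * n1^2 + B * n1 + C) - (A * n2^2 + B * n2 + C)"
    by (simp add: algebra_simps power2_eq_square)
  then have "(n1 - n2) * (A * (n1 + n2) + B) = 0" using r1 r2 by simp
  then have e2: "A * (n1 + n2) + B = 0" using d12 by simp
  have "(n1 - n3) * (A * (n1 + n3) + B) = (A * n1^2 + B * n1 + C) - (A * n3^2 + B * n3 + C)"
    by (simp add: algebra_simps power2_eq_square)
  then have "(n1 - n3) * (A * (n1 + n3) + B) = 0" using r1 r3 by simp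
  then have e3: "A * (n1 + n3) + B = 0" using d13 by simp
  have "A * (n2 - n3) = (A * (n1 + n2) + B) - (A * (n1 + n3) + B)" by (simp add: algebra_simps)
  then have "A * (n2 - n3) = 0" using e2 e3 by simp
  then show ?thesis using A by simp
qed

lemma card_le2:
  assumes fin: "finite S" and no3: "\<And>x y z. x \<in> S \<Longrightarrow> y \<in> S \<Longrightarrow> z \<in> S \<Longrightarrow> x \<noteq> y \<Longrightarrow> x \<noteq> z \<Longrightarrow> y = z"
  shows "card S \<le> 2"
proof (cases "S = {}")
  case True then show ?thesis by simp
next
  case False
  then obtain x0 where x0: "x0 \<in> S" by blast
  show ?thesis
  proof (cases "S \<subseteq> {x0}")
    case True
    then have "card S \<le> card {x0}" by (intro card_mono) auto
    then show ?thesis by simp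
  next
    case False
    then obtain y0 where y0: "y0 \<in> S" "y0 \<noteq> x0" by blast
    have "S \<subseteq> {x0, y0}" using no3 x0 y0 by blast
    then have "card S \<le> card {x0, y0}" by (intro card_mono) auto
    also have "\<dots> \<le> 2" by (simp add: card_insert_le_m1)
    finally show ?thesis .
  qed
qed

context F2 begin

lemma line_count:
  assumes a: "a \<noteq> 0" and bnz: "b \<noteq> 0" and bcj: "cj b = b"
    and x1: "a * x1 + b' * (b * cj x1 * x1 + \<delta>) + c = 0"
    and x2: "a * x2 + b' * (b * cj x2 * x2 + \<delta>) + c = 0"
    and x3: "a * x3 + b' * (b * cj x3 * x3 + \<delta>) + c = 0"
    and d12: "x1 \<noteq> x2" and d13: "x1 \<noteq> x3"
  shows "x2 = x3"
proof (cases "b' = 0")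
  case True
  then have "a * x1 = a * x2" "a * x1 = a * x3" using x1 x2 x3 sum0 by auto
  then show ?thesis using a d12 by simp
next
  case False
  define K where "K = b' * b"
  define J where "J = b' * \<delta> + c"
  have Knz: "K \<noteq> 0" using False bnz by (simp add: K_def)
  have ax: "a * x = K * (cj x * x) + J" if "a * x + b' * (b * cj x * x + \<delta>) + c = 0" for x
  proof -
    have "a * x + (K * (cj x * x) + J) = 0" using that by (simp add: K_def J_def algebra_simps)
    then show ?thesis using sum0 by metis
  qed
  have quad: "(cj K * K) * (cj x * x)^2 + (cj K * J + cj J * K - cj a * a) * (cj x * x) + cj J * J = 0"
    if "a * x + b' * (b * cj x * x + \<delta>) + c = 0" for x
  proof -
    have cjn: "cj (cj x * x) = cj x * x" by (simp add: mult.commute)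
    have "cj a * a * (cj x * x) = cj (a * x) * (a * x)" by (simp add: algebra_simps)
    also have "\<dots> = (cj K * (cj x * x) + cj J) * (K * (cj x * x) + J)"
      using ax[OF that] cjn by simp
    finally have "cj a * a * (cj x * x) = (cj K * (cj x * x) + cj J) * (K * (cj x * x) + J)" .
    then have "(cj K * (cj x * x) + cj J) * (K * (cj x * x) + J) - cj a * a * (cj x * x) = 0"
      by simp
    then show ?thesis by (simp add: algebra_simps power2_eq_square)
  qed
  have ninj: "cj u * u \<noteq> cj w * w" if "u \<noteq> w"
    "a * u + b' * (b * cj u * u + \<delta>) + c = 0" "a * w + b' * (b * cj w * w + \<delta>) + c = 0" for u w
  proof
    assume "cj u * u = cj w * w"
    then have "a * u = a * w" using ax[OF that(2)] ax[OF that(3)] by simp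
    then show False using a that(1) by simp
  qed
  have "cj x2 * x2 = cj x3 * x3"
    by (rule quad3[of "cj K * K", OF _ quad[OF x1] quad[OF x2] quad[OF x3] ninj[OF d12 x1 x2] ninj[OF d13 x1 x3]])
       (use Knz in simp)
  then have "a * x2 = a * x3" using ax[OF x2] ax[OF x3] by simp
  then show ?thesis using a by simp
qed

end


theorem lemma3p4:
  fixes h :: nat and \<alpha> \<beta> \<delta> v :: "'a::{field, finite}"
  defines "q \<equiv> 2 ^ h"
  assumes hq: "h \<ge> 2"
    and card: "card (UNIV :: 'a set) = q ^ 2"
    and delta_notin: "\<delta> \<notin> subF q"
    and delta_q: "\<delta> ^ q = 1 + \<delta>"
    and delta_sq: "\<delta> ^ 2 = v + \<delta>"
    and v_in: "v \<in> subF q" and v_ne1: "v \<noteq> 1" and v_tr: "abs_trace h v = 1"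
    and alpha_ne: "\<alpha> \<noteq> 0"
    and beta_notin: "\<beta> \<notin> subF q"
    and tr0: "abs_trace h (\<alpha> ^ (q + 1) / (\<beta> ^ q + \<beta>) ^ 2) = 0"
    and l_line: "l \<in> PG2_lines"
    and l_not_Uinf: "ppt (1, 0, 0) \<notin> l"
  shows "card (l \<inter> pedal (U_ab q \<alpha> \<beta>) (ppt (0, \<delta>, 1))) \<le> 2"
proof -
  have qpos: "q > 0" by (simp add: q_def)
  have qh: "q = 2 ^ h" by (simp add: q_def)
  have ferm: "x ^ (q ^ 2) = x" for x :: 'a using fermat_fin[of x] card by simp
  have "even (q ^ 2)" using hq by (simp add: q_def)
  then have "(-1 :: 'a) ^ (q ^ 2) = 1" by simp
  then have m1: "(-1 :: 'a) = 1" using ferm[of "-1"] by simp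
  have two: "(2::'a) = 0"
  proof -
    have "(1::'a) + 1 = 1 + (-1)" using m1 by simp
    then show ?thesis by simp
  qed
  define cj where "cj = (\<lambda>x::'a. x ^ q)"
  interpret F: F2 q cj
  proof
    show "cj (x + y) = cj x + cj y" for x y :: 'a unfolding q_def cj_def by (rule frob2[OF two])
    show "cj (cj x) = x" for x :: 'a using ferm[of x] by (simp add: cj_def power_mult[symmetric] power2_eq_square)
  qed (auto simp: two qpos cj_def)
  define b where "b = cj \<beta> + \<beta>"
  have bnz: "b \<noteq> 0"
  proof
    assume "b = 0"
    then have "cj \<beta> = \<beta>" using F.sum0 b_def by metis
    then show False using beta_notin by (simp add: subF_def cj_def)
  qed
  have bcj: "cj b = b" by (simp add: b_def add.commute)
  have dl: "cj \<delta> + \<delta> = 1" using delta_q by (simp add: add.assoc cj_def)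
  have tr: "abs_trace h (\<alpha> ^ (q + 1) / (cj \<beta> + \<beta>) ^ 2) = 0" using tr0 by (simp add: cj_def)
  have pf: "\<exists>x. P = ppt (x, b * cj x * x + \<delta>, 1)"
    if "P \<in> pedal (U_ab q \<alpha> \<beta>) (ppt (0, \<delta>, 1))" for P
    using F.pedal_form[OF qh bnz[unfolded b_def] tr dl that] by (simp add: b_def)
  obtain a b' c where L0: "(a, b', c) \<noteq> (0,0,0)" and ll: "l = pline (a, b', c)"
    using l_line by (rule PG2_lines_E)
  have anz: "a \<noteq> 0"
  proof
    assume "a = 0"
    then have "ppt (1, 0, 0) \<in> l" using ll ppt_in_pline[of "(1,0,0)" "(a,b',c)"] by (simp add: dot3_def)
    then show False using l_not_Uinf by simp
  qed
  define X where "X = {x. a * x + b' * (b * cj x * x + \<delta>) + c = 0}"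
  define g where "g x = ppt (x, b * cj x * x + \<delta>, 1)" for x
  have sub: "l \<inter> pedal (U_ab q \<alpha> \<beta>) (ppt (0, \<delta>, 1)) \<subseteq> g ` X"
  proof
    fix P assume P: "P \<in> l \<inter> pedal (U_ab q \<alpha> \<beta>) (ppt (0, \<delta>, 1))"
    then obtain x where Px: "P = ppt (x, b * cj x * x + \<delta>, 1)" using pf by blast
    have "dot3 (a, b', c) (x, b * cj x * x + \<delta>, 1) = 0"
      using P Px ll ppt_in_pline[of "(x, b * cj x * x + \<delta>, 1)" "(a,b',c)"] by simp
    then have "x \<in> X" by (simp add: X_def dot3_def)
    then show "P \<in> g ` X" using Px g_def by blast
  qed
  have cX: "card X \<le> 2"
  proof (rule card_le2)
    show "finite X" by simp
    fix x y z assume "x \<in> X" "y \<in> X" "z \<in> X" "x \<noteq> y" "x \<noteq> z"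
    then show "y = z" unfolding X_def mem_Collect_eq by (rule F.line_count[OF anz bnz bcj])
  qed
  have "card (l \<inter> pedal (U_ab q \<alpha> \<beta>) (ppt (0, \<delta>, 1))) \<le> card (g ` X)"
    by (rule card_mono[OF _ sub]) simp
  also have "\<dots> \<le> card X" by (rule card_image_le) simp
  finally show ?thesis using cX by (rule le_trans)
qed


end
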